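(* There exist absolute constants $c>0$ and $k_0$ such that for every $k\ge k_0$ and every $f(x,y)\in\mathbb{C}[x,y]$ whose Newton polytope has exactly $k$ vertices, there exists $a\in\mathbb{C}\setminus\{0\}$ such that the real univariate polynomial $\Re(f(x,a))$ has at least $ck$ distinct real roots.
   Context: $\mathrm{Newt}(f)$ is the convex hull of $\{(i,j):a_{i,j}\ne0\}$ for $f=\sum a_{i,j}x^iy^j$. For a univariate complex polynomial $g(x)=\sum_ia_ix^i$, $\Re(g):=\sum_i\Re(a_i)x^i\in\mathbb{R}[x]$. *)

theory Defs
  imports "HOL-Analysis.Analysis" "HOL-Computational_Algebra.Polynomial"
begin

text \<open>A bivariate complex polynomial f = sum a_(i,j) x^i y^j is represented by its
  coefficient function (i,j) \<mapsto> a_(i,j), with finite support.\<close>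

definition bsupp :: "(nat \<times> nat \<Rightarrow> complex) \<Rightarrow> (nat \<times> nat) set" where
  "bsupp f = {p. f p \<noteq> 0}"

definition newton_polytope :: "(nat \<times> nat \<Rightarrow> complex) \<Rightarrow> (real \<times> real) set" where
  "newton_polytope f = convex hull ((\<lambda>(i,j). (real i, real j)) ` bsupp f)"

definition newton_vertices :: "(nat \<times> nat \<Rightarrow> complex) \<Rightarrow> (real \<times> real) set" where
  "newton_vertices f = {v. v extreme_point_of newton_polytope f}"

definition specialize_y :: "(nat \<times> nat \<Rightarrow> complex) \<Rightarrow> complex \<Rightarrow> complex poly" where
  "specialize_y f a = (\<Sum>(i,j)\<in>bsupp f. monom (f (i,j) * a ^ j) i)"

definition re_poly :: "complex poly \<Rightarrow> real poly" where
  "re_poly g = map_poly Re g"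

end

theory Submission
  imports Defs
begin



lemma sum_cos_roots:
  fixes N :: nat and k :: int and c :: real
  assumes N: "N > 0" and nd: "\<not> (int N dvd k)"
  shows "(\<Sum>r<N. cos (c + real_of_int k * (2*pi*real r/N))) = 0"
proof -
  define z where "z = cis (2*pi*real_of_int k/N)"
  have z1: "z \<noteq> 1"
  proof
    assume "z = 1"
    then have "exp (\<i> * complex_of_real (2*pi*real_of_int k/N)) = 1" by (simp add: z_def cis_conv_exp)
    then obtain n::int where "2*pi*real_of_int k/N = of_int (2*n) * pi" by (auto simp: exp_eq_1)
    then have "real_of_int k = real_of_int n * N" using N by (simp add: field_simps)
    then have "k = n * int N" by (metis of_int_eq_iff of_int_mult of_int_of_nat_eq)
    with nd show False by simp
  qed
  have e: "real N * (2*pi*real_of_int k/N) = 2*pi*real_of_int k" using N by simp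
  have zN: "z ^ N = 1" unfolding z_def Complex.DeMoivre e
    using cis_multiple_2pi[of "real_of_int k"] by simp
  have "(\<Sum>r<N. z ^ r) = 0" using geometric_sum[OF z1, of N] zN by simp
  then have "(\<Sum>r<N. cis c * z ^ r) = 0" by (simp add: sum_distrib_left[symmetric])
  then have "Re (\<Sum>r<N. cis c * z ^ r) = 0" by simp
  moreover have "\<And>r. Re (cis c * z ^ r) = cos (c + real_of_int k * (2*pi*real r/N))"
    by (simp add: z_def Complex.DeMoivre cis_mult algebra_simps)
  ultimately show ?thesis by (simp add: Re_sum)
qed

lemma cos_prod_sq:
  fixes A B :: real shows "(cos A * cos B)^2 = 1/4 + cos(2*A)/4 + cos(2*B)/4 + cos(2*A+2*B)/8 + cos(2*A-2*B)/8"
proof -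
  have h: "cos(2*A+2*B)/8 + cos(2*A-2*B)/8 = cos(2*A)*cos(2*B)/4" by (simp add: cos_add cos_diff field_simps)
  have "1/4 + cos(2*A)/4 + cos(2*B)/4 + cos(2*A+2*B)/8 + cos(2*A-2*B)/8
     = (1+cos(2*A))*(1+cos(2*B))/4" using h by (simp add: algebra_simps)
  also have "... = (cos A * cos B)^2" by (simp add: cos_double_cos power_mult_distrib)
  finally show ?thesis by simp
qed

lemma cos_prod: fixes A B :: real shows "cos A * cos B = (cos (A+B) + cos (A-B))/2"
  by (simp add: cos_add cos_diff)

lemma count_neg:
  fixes N m n :: nat and \<alpha> \<beta> :: real
  assumes m: "m \<ge> 1" and n: "n \<ge> 1" and mn: "m \<noteq> n" and N: "N > 2*(m+n)"
  shows "real N \<le> 8 * real (card {r\<in>{..<N}. cos (\<alpha> + m*(2*pi*real r/N)) * cos (\<beta> + n*(2*pi*real r/N)) < 0})"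
proof -
  define th where "th r = 2*pi*real r/N" for r :: nat
  define G where "G r = cos (\<alpha> + m*th r) * cos (\<beta> + n*th r)" for r
  have N0: "N > 0" using N by simp
  have nd: "\<not> int N dvd k" if "k \<noteq> 0" "\<bar>k\<bar> < int N" for k :: int
    using that dvd_imp_le_int[of k "int N"] by auto
  have s0: "(\<Sum>r<N. cos (c + real_of_int k * th r)) = 0" if "k \<noteq> 0" "\<bar>k\<bar> < int N" for k c
    using sum_cos_roots[OF N0 nd[OF that]] by (simp add: th_def)
  have G1: "G r = (cos ((\<alpha>+\<beta>) + real_of_int (int m + int n) * th r) + cos ((\<alpha>-\<beta>) + real_of_int (int m - int n) * th r))/2" for r
    unfolding G_def cos_prod by (simp add: algebra_simps)
  have sG: "(\<Sum>r<N. G r) = 0"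
    unfolding G1 sum_divide_distrib[symmetric] sum.distrib
    using s0[of "int m + int n"] s0[of "int m - int n"] m n mn N by simp
  have G2: "(G r)^2 = 1/4 + cos (2*\<alpha> + real_of_int (2*int m) * th r)/4 + cos (2*\<beta> + real_of_int (2*int n) * th r)/4
     + cos ((2*\<alpha>+2*\<beta>) + real_of_int (2*int m + 2*int n) * th r)/8 + cos ((2*\<alpha>-2*\<beta>) + real_of_int (2*int m - 2*int n) * th r)/8" for r
    unfolding G_def cos_prod_sq by (simp add: algebra_simps)
  have sG2: "(\<Sum>r<N. (G r)^2) = real N / 4"
    unfolding G2 sum.distrib sum_divide_distrib[symmetric]
    using s0[of "2*int m"] s0[of "2*int n"] s0[of "2*int m + 2*int n"] s0[of "2*int m - 2*int n"] m n mn N by simp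
  have Gb: "\<bar>G r\<bar> \<le> 1" for r unfolding G_def abs_mult
    by (intro mult_le_one) auto
  have "(G r)^2 \<le> \<bar>G r\<bar>" for r using Gb[of r]
    by (metis abs_ge_zero abs_mult_self_eq mult_left_le power2_eq_square abs_mult)
  then have "real N / 4 \<le> (\<Sum>r<N. \<bar>G r\<bar>)" unfolding sG2[symmetric] by (intro sum_mono) auto
  also have "(\<Sum>r<N. \<bar>G r\<bar>) = (\<Sum>r<N. G r) + 2 * (\<Sum>r<N. max 0 (- G r))"
    by (simp add: sum.distrib[symmetric] sum_distrib_left) (intro sum.cong, auto simp: abs_if max_def)
  also have "(\<Sum>r<N. max 0 (- G r)) \<le> (\<Sum>r<N. if G r < 0 then 1 else 0)"
  proof (intro sum_mono)
    fix r show "max 0 (- G r) \<le> (if G r < 0 then 1 else 0)" using Gb[of r] by (auto simp: abs_le_iff)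
  qed
  also have "(\<Sum>r<N. if G r < 0 then 1 else (0::real)) = real (card {r\<in>{..<N}. G r < 0})"
    by (simp add: sum.If_cases Int_def conj_commute)
  finally have "real N \<le> 8 * real (card {r\<in>{..<N}. G r < 0})" unfolding sG by simp
  then show ?thesis unfolding G_def th_def by simp
qed



lemma poly_re_poly: "poly (re_poly g) x = Re (poly g (of_real x))"
  unfolding re_poly_def
proof (induction g rule: pCons_induct)
  case 0 then show ?case by simp
next
  case (pCons a p) then show ?case by (simp add: map_poly_pCons)
qed

lemma poly_P:
  assumes "finite (bsupp f)"
  shows "poly (re_poly (specialize_y f a)) x = (\<Sum>q\<in>bsupp f. Re (f q * a ^ snd q) * x ^ fst q)"
proof -
  have "poly (specialize_y f a) (of_real x) = (\<Sum>q\<in>bsupp f. f q * a ^ snd q * of_real x ^ fst q)"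
    unfolding specialize_y_def poly_sum by (intro sum.cong) (auto simp: poly_monom)
  then show ?thesis unfolding poly_re_poly by (simp add: Re_sum flip: of_real_power)
qed

lemma dominance:
  fixes f :: "nat \<times> nat \<Rightarrow> complex" and \<epsilon> s :: real and \<omega> :: complex
  assumes fin: "finite (bsupp f)" and v: "v \<in> bsupp f"
    and uniq: "\<forall>q\<in>bsupp f. q \<noteq> v \<longrightarrow> \<epsilon>*real(snd q) + s*real(fst q) < \<epsilon>*real(snd v) + s*real(fst v)"
    and psi: "Re (f v * \<omega> ^ snd v) \<noteq> 0"
  shows "\<forall>\<^sub>F T in at_top. poly (re_poly (specialize_y f (of_real (T powr \<epsilon>) * \<omega>))) (T powr s) * Re (f v * \<omega> ^ snd v) > 0"
proof -
  define S where "S = bsupp f"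
  define E where "E q = \<epsilon>*real(snd q) + s*real(fst q)" for q :: "nat \<times> nat"
  define ps where "ps q = Re (f q * \<omega> ^ snd q)" for q
  define K where "K = card S"
  have K: "K > 0" using fin v unfolding K_def S_def by (auto simp: card_gt_0_iff)
  have psv: "\<bar>ps v\<bar> > 0" using psi by (simp add: ps_def)
  have ev1: "\<forall>\<^sub>F T in at_top. \<forall>q\<in>S-{v}. \<bar>ps q\<bar> * T powr (E q - E v) < \<bar>ps v\<bar> / K"
  proof (rule eventually_ball_finite)
    show "finite (S - {v})" using fin by (simp add: S_def)
    show "\<forall>q\<in>S - {v}. \<forall>\<^sub>F T in at_top. \<bar>ps q\<bar> * T powr (E q - E v) < \<bar>ps v\<bar> / K"
    proof
      fix q assume q: "q \<in> S - {v}"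
      then have "E q - E v < 0" using uniq by (auto simp: S_def E_def)
      then have "((\<lambda>T. T powr (E q - E v)) \<longlongrightarrow> 0) at_top"
        by (intro tendsto_neg_powr) (auto simp: filterlim_ident)
      then have "((\<lambda>T. \<bar>ps q\<bar> * T powr (E q - E v)) \<longlongrightarrow> \<bar>ps q\<bar> * 0) at_top"
        by (intro tendsto_mult tendsto_const)
      then show "\<forall>\<^sub>F T in at_top. \<bar>ps q\<bar> * T powr (E q - E v) < \<bar>ps v\<bar> / K"
        using psv K by (intro order_tendstoD(2)) auto
    qed
  qed
  moreover have "\<forall>\<^sub>F T in at_top. (0::real) < T" by (rule eventually_gt_at_top)
  ultimately show ?thesis
  proof eventually_elim
    case (elim T)
    have T: "T > 0" using elim by simp
    have trm: "Re (f q * (of_real (T powr \<epsilon>) * \<omega>) ^ snd q) * (T powr s) ^ fst q = ps q * T powr E q" for q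
    proof -
      have "Re (f q * (of_real (T powr \<epsilon>) * \<omega>) ^ snd q) = (T powr \<epsilon>)^snd q * ps q"
        by (simp add: ps_def power_mult_distrib algebra_simps flip: of_real_power)
      then show ?thesis using T by (simp add: powr_power E_def powr_add algebra_simps)
    qed
    have P: "poly (re_poly (specialize_y f (of_real (T powr \<epsilon>) * \<omega>))) (T powr s) = ps v * T powr E v + (\<Sum>q\<in>S-{v}. ps q * T powr E q)"
      unfolding poly_P[OF fin] trm using fin v by (simp add: S_def sum.remove)
    have "\<bar>\<Sum>q\<in>S-{v}. ps q * T powr E q\<bar> \<le> (\<Sum>q\<in>S-{v}. \<bar>ps q\<bar> * T powr E q)"
      by (rule order_trans[OF sum_abs]) (simp add: abs_mult)
    also have "\<dots> = (\<Sum>q\<in>S-{v}. \<bar>ps q\<bar> * T powr (E q - E v)) * T powr E v"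
      using T by (simp add: sum_distrib_right powr_diff)
    also have "(\<Sum>q\<in>S-{v}. \<bar>ps q\<bar> * T powr (E q - E v)) \<le> real (card (S-{v})) * (\<bar>ps v\<bar> / K)"
      using elim by (intro sum_bounded_above) (auto intro: less_imp_le)
    also have "real (card (S-{v})) = real K - 1" using fin v K by (simp add: S_def K_def of_nat_diff)
    finally have R: "\<bar>\<Sum>q\<in>S-{v}. ps q * T powr E q\<bar> \<le> (real K - 1) * (\<bar>ps v\<bar> / K) * T powr E v"
      using T by (simp add: mult_right_mono)
    have "(real K - 1) * (\<bar>ps v\<bar> / K) < \<bar>ps v\<bar>" using K psv by (simp add: field_simps)
    then have R2: "\<bar>\<Sum>q\<in>S-{v}. ps q * T powr E q\<bar> < \<bar>ps v\<bar> * T powr E v"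
      using R T by (smt (verit) mult_strict_right_mono powr_gt_zero)
    have "ps v * (ps v * T powr E v) = \<bar>ps v\<bar> * (\<bar>ps v\<bar> * T powr E v)" by (simp add: abs_mult_self_eq flip: mult.assoc)
    moreover have "\<bar>ps v * (\<Sum>q\<in>S-{v}. ps q * T powr E q)\<bar> < \<bar>ps v\<bar> * (\<bar>ps v\<bar> * T powr E v)"
      unfolding abs_mult using R2 psv by (simp add: mult_strict_left_mono)
    moreover have "(ps v * T powr E v + (\<Sum>q\<in>S-{v}. ps q * T powr E q)) * ps v =
       ps v * (ps v * T powr E v) + ps v * (\<Sum>q\<in>S-{v}. ps q * T powr E q)" by (simp add: algebra_simps)
    ultimately have "(ps v * T powr E v + (\<Sum>q\<in>S-{v}. ps q * T powr E q)) * ps v > 0"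
      unfolding abs_less_iff by linarith
    then show ?case unfolding P by (simp add: ps_def)
  qed
qed


lemma exposed_aux:
  fixes T :: "(real \<times> real) set" and a :: "real \<times> real"
  assumes a: "convex hull T \<subseteq> {x. a \<bullet> x \<le> b}" and b: "{v} = convex hull T \<inter> {x. a \<bullet> x = b}"
  shows "\<exists>\<alpha> \<beta>. \<forall>q\<in>T. q \<noteq> v \<longrightarrow> \<alpha> * fst q + \<beta> * snd q < \<alpha> * fst v + \<beta> * snd v"
proof -
  have ip: "a \<bullet> x = fst a * fst x + snd a * snd x" for x :: "real \<times> real"
    by (cases a, cases x) simp
  have "v \<in> {v}" by simp
  then have "v \<in> convex hull T \<inter> {x. a \<bullet> x = b}" by (simp only: b)
  then have "v \<in> {x. a \<bullet> x = b}" by (rule IntD2)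
  then have vb: "a \<bullet> v = b" by (rule CollectD)
  have "\<forall>q\<in>T. q \<noteq> v \<longrightarrow> fst a * fst q + snd a * snd q < fst a * fst v + snd a * snd v"
  proof (intro ballI impI)
    fix q assume q: "q \<in> T" "q \<noteq> v"
    have qh: "q \<in> convex hull T" using q(1) by (rule hull_inc)
    then have "q \<in> {x. a \<bullet> x \<le> b}" using a by (rule subsetD[rotated])
    then have "a \<bullet> q \<le> b" by (rule CollectD)
    moreover have "a \<bullet> q \<noteq> b"
    proof
      assume "a \<bullet> q = b"
      then have "q \<in> convex hull T \<inter> {x. a \<bullet> x = b}" using qh by (intro IntI CollectI)
      then have "q \<in> {v}" by (simp only: b)
      then show False using q(2) by (simp only: singleton_iff)
    qed
    ultimately show "fst a * fst q + snd a * snd q < fst a * fst v + snd a * snd v"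
      using vb unfolding ip by simp
  qed
  then show ?thesis by blast
qed

lemma exposed_vertex:
  fixes T :: "(real \<times> real) set" assumes fin: "finite T" and ex: "v extreme_point_of (convex hull T)"
  shows "\<exists>\<alpha> \<beta>. \<forall>q\<in>T. q \<noteq> v \<longrightarrow> \<alpha> * fst q + \<beta> * snd q < \<alpha> * fst v + \<beta> * snd v"
proof -
  have "{v} face_of convex hull T" using ex by (simp add: face_of_singleton)
  then have "{v} exposed_face_of convex hull T"
    by (simp add: exposed_face_of_polyhedron[OF polyhedron_convex_hull[OF fin]])
  then have "\<exists>a b. convex hull T \<subseteq> {x. a \<bullet> x \<le> b} \<and> {v} = convex hull T \<inter> {x. a \<bullet> x = b}"
    unfolding exposed_face_of_def by (rule conjunct2)
  then obtain a b where a: "convex hull T \<subseteq> {x. a \<bullet> x \<le> b}" and b: "{v} = convex hull T \<inter> {x. a \<bullet> x = b}"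
    by blast
  show ?thesis by (rule exposed_aux[OF a b])
qed

lemma slope_exists:
  fixes T :: "(real \<times> real) set"
  assumes fin: "finite T" and h: "\<forall>q\<in>T. q \<noteq> v \<longrightarrow> \<alpha> * fst q + \<beta> * snd q < \<alpha> * fst v + \<beta> * snd v"
  shows "\<exists>\<epsilon> s. (\<epsilon> = 1 \<or> \<epsilon> = -1) \<and> (\<forall>q\<in>T. q \<noteq> v \<longrightarrow> \<epsilon> * snd q + s * fst q < \<epsilon> * snd v + s * fst v)"
proof (cases "\<beta> > 0")
  case True
  show ?thesis
  proof (rule exI[of _ "1"], rule exI[of _ "\<alpha>/\<beta>"], intro conjI ballI impI)
    fix q assume "q \<in> T" "q \<noteq> v"
    then have "(\<alpha> * fst q + \<beta> * snd q)/\<beta> < (\<alpha> * fst v + \<beta> * snd v)/\<beta>"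
      using h True by (intro divide_strict_right_mono) auto
    then show "1 * snd q + (\<alpha>/\<beta>) * fst q < 1 * snd v + (\<alpha>/\<beta>) * fst v"
      using True by (simp add: field_simps)
  qed simp
next
  case F: False
  show ?thesis
  proof (cases "\<beta> < 0")
    case True
    show ?thesis
    proof (rule exI[of _ "-1"], rule exI[of _ "\<alpha>/(-\<beta>)"], intro conjI ballI impI)
      fix q assume "q \<in> T" "q \<noteq> v"
      then have "(\<alpha> * fst q + \<beta> * snd q)/(-\<beta>) < (\<alpha> * fst v + \<beta> * snd v)/(-\<beta>)"
        using h True by (intro divide_strict_right_mono) auto
      then show "-1 * snd q + (\<alpha>/(-\<beta>)) * fst q < -1 * snd v + (\<alpha>/(-\<beta>)) * fst v"
        using True by (simp add: field_simps)
    qed simp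
  next
    case False
    then have b0: "\<beta> = 0" using F by simp
    have "\<forall>\<^sub>F \<eta> in at_right (0::real). \<forall>q\<in>T-{v}. \<alpha> * fst q + \<eta> * snd q - (\<alpha> * fst v + \<eta> * snd v) < 0"
    proof (rule eventually_ball_finite)
      show "finite (T - {v})" using fin by simp
      show "\<forall>q\<in>T - {v}. \<forall>\<^sub>F \<eta> in at_right 0. \<alpha> * fst q + \<eta> * snd q - (\<alpha> * fst v + \<eta> * snd v) < 0"
      proof
        fix q assume q: "q \<in> T - {v}"
        have "((\<lambda>\<eta>. \<alpha> * fst q + \<eta> * snd q - (\<alpha> * fst v + \<eta> * snd v)) \<longlongrightarrow>
               \<alpha> * fst q + 0 * snd q - (\<alpha> * fst v + 0 * snd v)) (at_right 0)"
          by (intro tendsto_intros)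
        moreover have "\<alpha> * fst q + 0 * snd q - (\<alpha> * fst v + 0 * snd v) < 0" using h q b0 by auto
        ultimately show "\<forall>\<^sub>F \<eta> in at_right 0. \<alpha> * fst q + \<eta> * snd q - (\<alpha> * fst v + \<eta> * snd v) < 0"
          by (rule order_tendstoD(2))
      qed
    qed
    moreover have "\<forall>\<^sub>F \<eta> in at_right (0::real). 0 < \<eta>" by (rule eventually_at_right_less)
    ultimately have "\<forall>\<^sub>F \<eta> in at_right (0::real). 0 < \<eta> \<and> (\<forall>q\<in>T-{v}. \<alpha> * fst q + \<eta> * snd q - (\<alpha> * fst v + \<eta> * snd v) < 0)"
      by eventually_elim auto
    then have "\<exists>\<eta>. 0 < \<eta> \<and> (\<forall>q\<in>T-{v}. \<alpha> * fst q + \<eta> * snd q - (\<alpha> * fst v + \<eta> * snd v) < 0)"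
      by (intro eventually_happens'[OF trivial_limit_at_right_real])
    then obtain \<eta> where e: "0 < \<eta>" "\<forall>q\<in>T-{v}. \<alpha> * fst q + \<eta> * snd q - (\<alpha> * fst v + \<eta> * snd v) < 0"
      by blast
    show ?thesis
    proof (rule exI[of _ "1"], rule exI[of _ "\<alpha>/\<eta>"], intro conjI ballI impI)
      fix q assume "q \<in> T" "q \<noteq> v"
      then have "(\<alpha> * fst q + \<eta> * snd q)/\<eta> < (\<alpha> * fst v + \<eta> * snd v)/\<eta>"
        using e by (intro divide_strict_right_mono) auto
      then show "1 * snd q + (\<alpha>/\<eta>) * fst q < 1 * snd v + (\<alpha>/\<eta>) * fst v"
        using e(1) by (simp add: field_simps)
    qed simp
  qed
qed




lemma Re_rot: "Re (a * cis x ^ m) = cmod a * cos (Arg a + real m * x)"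
proof -
  have "a * cis x ^ m = rcis (cmod a) (Arg a + real m * x)"
    by (subst (1) rcis_cmod_Arg[symmetric]) (simp add: rcis_def Complex.DeMoivre cis_mult mult.assoc)
  then show ?thesis by simp
qed

lemma count_neg_c:
  fixes N m n :: nat and a b :: complex
  assumes m: "m \<ge> 1" and n: "n \<ge> 1" and mn: "m \<noteq> n" and N: "N > 2*(m+n)" and a: "a \<noteq> 0" and b: "b \<noteq> 0"
  shows "real N \<le> 8 * real (card {r\<in>{..<N}. Re (a * cis (2*pi*real r/N) ^ m) * Re (b * cis (2*pi*real r/N) ^ n) < 0})"
proof -
  have eq: "Re (a * cis (2*pi*real r/N) ^ m) * Re (b * cis (2*pi*real r/N) ^ n) < 0 \<longleftrightarrow>
        cos (Arg a + m*(2*pi*real r/N)) * cos (Arg b + n*(2*pi*real r/N)) < 0" for r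
  proof -
    have "Re (a * cis (2*pi*real r/N) ^ m) * Re (b * cis (2*pi*real r/N) ^ n) =
      (cmod a * cmod b) * (cos (Arg a + m*(2*pi*real r/N)) * cos (Arg b + n*(2*pi*real r/N)))"
      unfolding Re_rot by (simp add: algebra_simps)
    moreover have "cmod a * cmod b > 0" using a b by simp
    ultimately show ?thesis by (simp add: mult_less_0_iff)
  qed
  show ?thesis unfolding eq using count_neg[OF m n mn N] by simp
qed



locale slopes =
  fixes S U :: "(nat \<times> nat) set" and \<epsilon> :: real and sl :: "nat \<times> nat \<Rightarrow> real"
  assumes US: "U \<subseteq> S"
    and uniq: "\<And>p q. p \<in> U \<Longrightarrow> q \<in> S \<Longrightarrow> q \<noteq> p \<Longrightarrow>
       \<epsilon>*real(snd q) + sl p*real(fst q) < \<epsilon>*real(snd p) + sl p*real(fst p)"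
begin

lemma A1: assumes "p \<in> U" "q \<in> U" "fst p < fst q" shows "sl p < sl q"
proof -
  have pq: "p \<noteq> q" using assms by auto
  have 1: "\<epsilon>*real(snd q) + sl p*real(fst q) < \<epsilon>*real(snd p) + sl p*real(fst p)"
    using uniq[of p q] assms pq US by auto
  have 2: "\<epsilon>*real(snd p) + sl q*real(fst p) < \<epsilon>*real(snd q) + sl q*real(fst q)"
    using uniq[of q p] assms pq US by auto
  have "(sl q - sl p) * (real (fst q) - real (fst p)) > 0" using 1 2 by (simp add: algebra_simps)
  moreover have "real (fst q) - real (fst p) > 0" using assms by simp
  ultimately show ?thesis by (simp add: zero_less_mult_iff)
qed

lemma A2: assumes "p \<in> U" "q \<in> U" "p \<noteq> q" shows "fst p \<noteq> fst q"
proof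
  assume e: "fst p = fst q"
  have 1: "\<epsilon>*real(snd q) + sl p*real(fst q) < \<epsilon>*real(snd p) + sl p*real(fst p)"
    using uniq[of p q] assms US by auto
  have 2: "\<epsilon>*real(snd p) + sl q*real(fst p) < \<epsilon>*real(snd q) + sl q*real(fst q)"
    using uniq[of q p] assms US by auto
  show False using 1 2 e by simp
qed

lemma A3: assumes "p \<in> U" "q \<in> U" "fst p < fst q" "snd p = snd q" shows "sl p < 0" "0 < sl q"
proof -
  have pq: "p \<noteq> q" using assms by auto
  have 1: "\<epsilon>*real(snd q) + sl p*real(fst q) < \<epsilon>*real(snd p) + sl p*real(fst p)"
    using uniq[of p q] assms pq US by auto
  have 2: "\<epsilon>*real(snd p) + sl q*real(fst p) < \<epsilon>*real(snd q) + sl q*real(fst q)"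
    using uniq[of q p] assms pq US by auto
  have "sl p * (real (fst q) - real (fst p)) < 0" using 1 assms(4) by (simp add: algebra_simps)
  moreover have "real (fst q) - real (fst p) > 0" using assms by simp
  ultimately show "sl p < 0" by (simp add: mult_less_0_iff)
  have "sl q * (real (fst q) - real (fst p)) > 0" using 2 assms(4) by (simp add: algebra_simps)
  then show "0 < sl q" using \<open>real (fst q) - real (fst p) > 0\<close> by (simp add: zero_less_mult_iff)
qed

lemma sorted_index:
  assumes fU: "finite U"
  obtains w where "\<And>l. l < card U \<Longrightarrow> w l \<in> U"
    and "\<And>l l'. l < l' \<Longrightarrow> l' < card U \<Longrightarrow> fst (w l) < fst (w l')"
proof -
  define L where "L = sorted_list_of_set (fst ` U)"
  have inj: "inj_on fst U" using A2 by (meson inj_onI)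
  have len: "length L = card U" unfolding L_def using card_image[OF inj] by simp
  have setL: "set L = fst ` U" unfolding L_def using fU by simp
  have ss: "sorted_wrt (<) L" unfolding L_def by (rule strict_sorted_list_of_set)
  define w where "w l = inv_into U fst (L ! l)" for l
  have wU: "w l \<in> U" if "l < card U" for l
  proof -
    have "L ! l \<in> fst ` U" using that len setL nth_mem by metis
    then show ?thesis unfolding w_def by (rule inv_into_into)
  qed
  have fw: "fst (w l) = L ! l" if "l < card U" for l
  proof -
    have "L ! l \<in> fst ` U" using that len setL nth_mem by metis
    then show ?thesis unfolding w_def by (rule f_inv_into_f)
  qed
  show ?thesis
  proof (rule that)
    show "\<And>l. l < card U \<Longrightarrow> w l \<in> U" by (rule wU)
    fix l l' assume "l < l'" "l' < card U"
    then show "fst (w l) < fst (w l')" using fw sorted_wrt_nth_less[OF ss, of l l'] len by simp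
  qed
qed

lemma count_C:
  fixes w :: "nat \<Rightarrow> nat \<times> nat" and m :: nat
  assumes wU: "\<And>l. l < m \<Longrightarrow> w l \<in> U"
    and mono: "\<And>l l'. l < l' \<Longrightarrow> l' < m \<Longrightarrow> fst (w l) < fst (w l')"
  shows "real m - 6 \<le> real (card {l. l+1 < m \<and> snd (w l) \<noteq> 0 \<and> snd (w (l+1)) \<noteq> 0 \<and> snd (w l) \<noteq> snd (w (l+1))})"
proof -
  define jj where "jj l = snd (w l)" for l
  define C where "C = {l. l+1 < m \<and> jj l \<noteq> 0 \<and> jj (l+1) \<noteq> 0 \<and> jj l \<noteq> jj (l+1)}"
  define B1 where "B1 = {l. l+1 < m \<and> jj l = jj (l+1)}"
  define Z where "Z = {l. l < m \<and> jj l = 0}"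
  define B3 where "B3 = {l. l+1 < m \<and> jj (l+1) = 0}"
  have ssm: "sl (w l) < sl (w l')" if "l < l'" "l' < m" for l l'
    using A1[of "w l" "w l'"] wU[of l] wU[of l'] mono[of l l'] that by auto
  have ssle: "sl (w l) \<le> sl (w l')" if "l \<le> l'" "l' < m" for l l'
    using ssm[of l l'] that by (cases "l = l'") auto
  have A3': "sl (w l) < 0 \<and> 0 < sl (w l')" if "l < l'" "l' < m" "jj l = jj l'" for l l'
    using A3[of "w l" "w l'"] wU[of l] wU[of l'] mono[of l l'] that by (auto simp: jj_def)
  have fB1: "finite B1" unfolding B1_def by (rule finite_subset[of _ "{..<m}"]) auto
  have cB1: "card B1 \<le> 1"
  proof -
    have "l = l'" if "l \<in> B1" "l' \<in> B1" for l l'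
    proof (rule ccontr)
      assume "l \<noteq> l'"
      then consider "l < l'" | "l' < l" by linarith
      then show False
      proof cases
        case 1
        have "0 < sl (w (l+1))" using A3'[of l "l+1"] that(1) unfolding B1_def by auto
        moreover have "sl (w l') < 0" using A3'[of l' "l'+1"] that(2) unfolding B1_def by auto
        moreover have "sl (w (l+1)) \<le> sl (w l')" using ssle[of "l+1" l'] 1 that(2) unfolding B1_def by auto
        ultimately show False by linarith
      next
        case 2
        have "0 < sl (w (l'+1))" using A3'[of l' "l'+1"] that(2) unfolding B1_def by auto
        moreover have "sl (w l) < 0" using A3'[of l "l+1"] that(1) unfolding B1_def by auto
        moreover have "sl (w (l'+1)) \<le> sl (w l)" using ssle[of "l'+1" l] 2 that(1) unfolding B1_def by auto
        ultimately show False by linarith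
      qed
    qed
    then show ?thesis using card_le_Suc0_iff_eq[OF fB1] by auto
  qed
  have fZ: "finite Z" unfolding Z_def by auto
  have cZ: "card Z \<le> 2"
  proof (cases "Z = {}")
    case True then show ?thesis by simp
  next
    case False
    have "Z \<subseteq> {Min Z, Max Z}"
    proof
      fix l assume l: "l \<in> Z"
      show "l \<in> {Min Z, Max Z}"
      proof (rule ccontr)
        assume "l \<notin> {Min Z, Max Z}"
        then have 1: "Min Z < l" "l < Max Z" using Min_le[OF fZ l] Max_ge[OF fZ l] by auto
        have mz: "Min Z \<in> Z" "Max Z \<in> Z" using fZ False by auto
        have "0 < sl (w l)" using A3'[of "Min Z" l] 1 l mz unfolding Z_def by auto
        moreover have "sl (w l) < 0" using A3'[of l "Max Z"] 1 l mz unfolding Z_def by auto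
        ultimately show False by linarith
      qed
    qed
    then have "card Z \<le> card {Min Z, Max Z}" by (rule card_mono[rotated]) simp
    also have "\<dots> \<le> 2" by (simp add: card_insert_if)
    finally show ?thesis .
  qed
  have fB3: "finite B3" unfolding B3_def by (rule finite_subset[of _ "{..<m}"]) auto
  have cB3: "card B3 \<le> card Z"
  proof -
    have "inj_on Suc B3" by simp
    moreover have "Suc ` B3 \<subseteq> Z" unfolding B3_def Z_def by auto
    ultimately show ?thesis using card_inj_on_le[of Suc B3 Z] fZ by simp
  qed
  have "{l. l+1 < m} \<subseteq> C \<union> B1 \<union> Z \<union> B3" unfolding C_def B1_def Z_def B3_def by auto
  then have "card {l. l+1 < m} \<le> card (C \<union> B1 \<union> Z \<union> B3)"
    by (rule card_mono[rotated]) (auto simp: C_def fB1 fZ fB3 intro: finite_subset[of _ "{..<m}"])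
  also have "\<dots> \<le> card C + card B1 + card Z + card B3"
    by (meson add_le_mono card_Un_le le_refl order_trans)
  finally have "card {l. l+1 < m} \<le> card C + 5" using cB1 cZ cB3 by linarith
  moreover have "{l. l+1 < m} = {..<m-1}" by auto
  ultimately have "m - 1 \<le> card C + 5" by simp
  then show ?thesis unfolding C_def jj_def by linarith
qed

end



lemma card_filter_sum: "finite A \<Longrightarrow> real (card {x\<in>A. P x}) = (\<Sum>x\<in>A. if P x then 1 else 0)"
  by (simp add: sum.If_cases Int_def conj_commute)

lemma main_eps:
  fixes f :: "nat \<times> nat \<Rightarrow> complex" and \<epsilon> :: real and U and sl
  assumes fin: "finite (bsupp f)" and sl: "slopes (bsupp f) U \<epsilon> sl"
  shows "\<exists>a. a \<noteq> 0 \<and> (\<exists>R. finite R \<and> real (card U) - 6 \<le> 8 * real (card R) \<and>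
           (\<forall>x\<in>R. poly (re_poly (specialize_y f a)) x = 0))"
proof -
  interpret slopes "bsupp f" U \<epsilon> sl by (rule sl)
  define S where "S = bsupp f"
  have fU: "finite U" using US fin finite_subset by blast
  define m where "m = card U"
  obtain w where wU: "\<And>l. l < m \<Longrightarrow> w l \<in> U"
    and mono: "\<And>l l'. l < l' \<Longrightarrow> l' < m \<Longrightarrow> fst (w l) < fst (w l')"
    using sorted_index[OF fU] unfolding m_def by blast
  have wS: "w l \<in> S" if "l < m" for l using wU[OF that] US S_def by auto
  have ssm: "sl (w l) < sl (w l')" if "l < l'" "l' < m" for l l'
    using A1[of "w l" "w l'"] wU[of l] wU[of l'] mono[of l l'] that by auto
  have ssle: "sl (w l) \<le> sl (w l')" if "l \<le> l'" "l' < m" for l l'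
    using ssm[of l l'] that by (cases "l = l'") auto
  define C where "C = {l. l+1 < m \<and> snd (w l) \<noteq> 0 \<and> snd (w (l+1)) \<noteq> 0 \<and> snd (w l) \<noteq> snd (w (l+1))}"
  have cC: "real m - 6 \<le> real (card C)" using count_C[OF wU mono] unfolding C_def by simp
  have fC: "finite C" unfolding C_def by (rule finite_subset[of _ "{..<m}"]) auto
  define J where "J = Max (snd ` S)"
  have jJ: "snd (w l) \<le> J" if "l < m" for l
    unfolding J_def using wS[OF that] fin S_def by (intro Max_ge) auto
  define N where "N = 4*J+1"
  have N0: "N > 0" unfolding N_def by simp
  define om where "om r = cis (2*pi*real r/N)" for r :: nat
  define ps where "ps r p = Re (f p * om r ^ snd p)" for r p
  define good where "good r l \<longleftrightarrow> ps r (w l) * ps r (w (l+1)) < 0" for r l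
  have cnt: "real N \<le> 8 * real (card {r\<in>{..<N}. good r l})" if l: "l \<in> C" for l
  proof -
    have lm: "l < m" "l+1 < m" using l unfolding C_def by auto
    have "f (w l) \<noteq> 0" "f (w (l+1)) \<noteq> 0" using wS[OF lm(1)] wS[OF lm(2)] by (auto simp: S_def bsupp_def)
    moreover have "N > 2 * (snd (w l) + snd (w (l+1)))" using jJ[OF lm(1)] jJ[OF lm(2)] unfolding N_def by presburger
    moreover have "snd (w l) \<ge> 1" "snd (w (l+1)) \<ge> 1" "snd (w l) \<noteq> snd (w (l+1))" using l unfolding C_def by auto
    ultimately show ?thesis
      using count_neg_c[of "snd (w l)" "snd (w (l+1))" N "f (w l)" "f (w (l+1))"]
      unfolding good_def ps_def om_def by simp
  qed
  have "\<exists>r<N. real (card C) \<le> 8 * real (card {l\<in>C. good r l})"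
  proof (rule ccontr)
    assume "\<not> ?thesis"
    then have lt: "8 * real (card {l\<in>C. good r l}) < real (card C)" if "r < N" for r
      using that by auto
    have cf: "real (card {r\<in>{..<N}. good r l}) = (\<Sum>r<N. if good r l then 1 else 0)" for l
      by (rule card_filter_sum) simp
    have "real N * real (card C) = (\<Sum>l\<in>C. real N)" by simp
    also have "\<dots> \<le> (\<Sum>l\<in>C. 8 * real (card {r\<in>{..<N}. good r l}))" by (intro sum_mono cnt)
    also have "\<dots> = 8 * (\<Sum>l\<in>C. \<Sum>r<N. if good r l then 1 else 0)"
      by (simp only: cf sum_distrib_left)
    also have "(\<Sum>l\<in>C. \<Sum>r<N. if good r l then 1 else (0::real)) = (\<Sum>r<N. \<Sum>l\<in>C. if good r l then 1 else 0)"
      by (rule sum.swap)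
    also have "8 * \<dots> = (\<Sum>r<N. 8 * real (card {l\<in>C. good r l}))"
      by (simp add: sum_distrib_left card_filter_sum[OF fC])
    also have "\<dots> < (\<Sum>r<N. real (card C))" using N0 by (intro sum_strict_mono lt) auto
    also have "\<dots> = real N * real (card C)" by simp
    finally show False by simp
  qed
  then obtain r where r: "r < N" and cG: "real (card C) \<le> 8 * real (card {l\<in>C. good r l})" by blast
  define G where "G = {l\<in>C. good r l}"
  define \<omega> where "\<omega> = om r"
  define P where "P T x = poly (re_poly (specialize_y f (of_real (T powr \<epsilon>) * \<omega>))) x" for T x
  define W where "W = w ` (G \<union> Suc ` G)"
  have Gm: "l < m" "l + 1 < m" if "l \<in> G" for l using that unfolding G_def C_def by auto
  have psnz: "ps r (w l) \<noteq> 0" "ps r (w (l+1)) \<noteq> 0" "ps r (w l) * ps r (w (l+1)) < 0" if "l \<in> G" for l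
    using that unfolding G_def good_def by auto
  have fW: "finite W" unfolding W_def G_def using fC by auto
  have ev: "\<forall>\<^sub>F T in at_top. \<forall>p\<in>W. P T (T powr sl p) * ps r p > 0"
  proof (rule eventually_ball_finite[OF fW], rule ballI)
    fix p assume "p \<in> W"
    then obtain l where l: "l \<in> G" "p = w l \<or> p = w (l+1)" unfolding W_def by auto
    then have pU: "p \<in> U" using wU Gm by auto
    have pnz: "Re (f p * \<omega> ^ snd p) \<noteq> 0" using psnz[OF l(1)] l(2) unfolding ps_def \<omega>_def by auto
    have un: "\<forall>q\<in>bsupp f. q \<noteq> p \<longrightarrow> \<epsilon>*real(snd q) + sl p*real(fst q) < \<epsilon>*real(snd p) + sl p*real(fst p)"
      using uniq[OF pU] by auto
    have "p \<in> bsupp f" using pU US by auto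
    from dominance[OF fin this un pnz]
    show "\<forall>\<^sub>F T in at_top. P T (T powr sl p) * ps r p > 0" unfolding P_def ps_def \<omega>_def .
  qed
  moreover have "\<forall>\<^sub>F T in at_top. (1::real) < T" by (rule eventually_gt_at_top)
  ultimately have "\<forall>\<^sub>F T in at_top. 1 < T \<and> (\<forall>p\<in>W. P T (T powr sl p) * ps r p > 0)"
    by eventually_elim auto
  then have "\<exists>T. 1 < T \<and> (\<forall>p\<in>W. P T (T powr sl p) * ps r p > 0)"
    by (intro eventually_happens'[OF trivial_limit_at_top_linorder])
  then obtain T where T: "1 < T" and dom: "\<And>p. p \<in> W \<Longrightarrow> P T (T powr sl p) * ps r p > 0" by blast
  define x where "x l = T powr sl (w l)" for l
  have roots: "\<forall>l\<in>G. \<exists>\<rho>. x l < \<rho> \<and> \<rho> < x (l+1) \<and> P T \<rho> = 0"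
  proof
    fix l assume l: "l \<in> G"
    have xl: "x l < x (l+1)" unfolding x_def using ssm[of l "l+1"] Gm[OF l] T by simp
    have d1: "P T (x l) * ps r (w l) > 0" using dom[of "w l"] l unfolding W_def x_def by auto
    have d2: "P T (x (l+1)) * ps r (w (l+1)) > 0" using dom[of "w (l+1)"] l unfolding W_def x_def by auto
    have pr: "ps r (w l) * ps r (w (l+1)) < 0" using psnz[OF l] by simp
    show "\<exists>\<rho>. x l < \<rho> \<and> \<rho> < x (l+1) \<and> P T \<rho> = 0"
    proof (cases "ps r (w l) > 0")
      case True
      then have "ps r (w (l+1)) < 0" using pr by (simp add: mult_less_0_iff)
      then have "P T (x l) > 0" "P T (x (l+1)) < 0" using True d1 d2 by (auto simp: zero_less_mult_iff)
      then show ?thesis unfolding P_def using poly_IVT_neg[OF xl] by blast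
    next
      case False
      then have "ps r (w l) < 0" using psnz[OF l] by linarith
      then have "ps r (w (l+1)) > 0" using pr by (simp add: mult_less_0_iff)
      then have "P T (x l) < 0" "P T (x (l+1)) > 0" using \<open>ps r (w l) < 0\<close> d1 d2 by (auto simp: zero_less_mult_iff)
      then show ?thesis unfolding P_def using poly_IVT_pos[OF xl] by blast
    qed
  qed
  then obtain \<rho> where \<rho>: "\<And>l. l \<in> G \<Longrightarrow> x l < \<rho> l \<and> \<rho> l < x (l+1) \<and> P T (\<rho> l) = 0"
    by metis
  have lt: "\<rho> l < \<rho> l'" if "l \<in> G" "l' \<in> G" "l < l'" for l l'
  proof -
    have "x (l+1) \<le> x l'" unfolding x_def using ssle[of "l+1" l'] that Gm[OF that(2)] T
      by (intro powr_mono) auto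
    then show ?thesis using \<rho>[OF that(1)] \<rho>[OF that(2)] by linarith
  qed
  have inj: "inj_on \<rho> G"
  proof (rule inj_onI)
    fix l l' assume "l \<in> G" "l' \<in> G" "\<rho> l = \<rho> l'"
    then show "l = l'" using lt[of l l'] lt[of l' l] by (metis less_irrefl linorder_neqE_nat)
  qed
  have fG: "finite G" unfolding G_def using fC by auto
  show ?thesis
  proof (intro exI conjI)
    show "of_real (T powr \<epsilon>) * \<omega> \<noteq> 0" using T unfolding \<omega>_def om_def by simp
    show "finite (\<rho> ` G)" using fG by simp
    show "real (card U) - 6 \<le> 8 * real (card (\<rho> ` G))"
      using cC cG card_image[OF inj] unfolding m_def G_def by simp
    show "\<forall>y\<in>\<rho> ` G. poly (re_poly (specialize_y f (of_real (T powr \<epsilon>) * \<omega>))) y = 0"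
      using \<rho> unfolding P_def by auto
  qed
qed



theorem theorem2p3:
  shows "\<exists>c::real. c > 0 \<and> (\<exists>k0::nat. \<forall>k\<ge>k0. \<forall>f :: nat \<times> nat \<Rightarrow> complex.
           finite (bsupp f) \<and> card (newton_vertices f) = k \<longrightarrow>
           (\<exists>a::complex. a \<noteq> 0 \<and>
              (\<exists>S :: real set. finite S \<and> c * real k \<le> real (card S) \<and>
                 (\<forall>x\<in>S. poly (re_poly (specialize_y f a)) x = 0))))"
proof (rule exI[of _ "1/32"], rule conjI)
  show "(0::real) < 1/32" by simp
next
  show "\<exists>k0::nat. \<forall>k\<ge>k0. \<forall>f :: nat \<times> nat \<Rightarrow> complex.
           finite (bsupp f) \<and> card (newton_vertices f) = k \<longrightarrow>
           (\<exists>a::complex. a \<noteq> 0 \<and>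
              (\<exists>S :: real set. finite S \<and> 1/32 * real k \<le> real (card S) \<and>
                 (\<forall>x\<in>S. poly (re_poly (specialize_y f a)) x = 0)))"
  proof (rule exI[of _ 24], intro allI impI)
  fix k :: nat and f :: "nat \<times> nat \<Rightarrow> complex"
  assume k: "24 \<le> k" and h: "finite (bsupp f) \<and> card (newton_vertices f) = k"
  then have fin: "finite (bsupp f)" and cV: "card (newton_vertices f) = k" by auto
  define S where "S = bsupp f"
  define phi :: "nat \<times> nat \<Rightarrow> real \<times> real" where "phi = (\<lambda>(i,j). (real i, real j))"
  have phi: "phi q = (real (fst q), real (snd q))" for q by (cases q) (simp add: phi_def)
  have injphi: "inj phi" by (rule injI) (auto simp: phi prod_eq_iff)
  define T where "T = phi ` S"
  have fT: "finite T" using fin unfolding T_def S_def by simp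
  define V where "V = newton_vertices f"
  have vex: "v extreme_point_of (convex hull T)" if "v \<in> V" for v
    using that unfolding V_def newton_vertices_def newton_polytope_def T_def S_def phi_def by simp
  define Ue where "Ue \<epsilon> = {p\<in>S. \<exists>s. \<forall>q\<in>S. q \<noteq> p \<longrightarrow> \<epsilon>*real(snd q) + s*real(fst q) < \<epsilon>*real(snd p) + s*real(fst p)}" for \<epsilon> :: real
  have VU: "V \<subseteq> phi ` (Ue 1 \<union> Ue (-1))"
  proof
    fix v assume v: "v \<in> V"
    have "v \<in> T" using vex[OF v] extreme_point_of_convex_hull by blast
    then obtain p where p: "p \<in> S" "v = phi p" unfolding T_def by auto
    obtain \<alpha> \<beta> where ab: "\<forall>q\<in>T. q \<noteq> v \<longrightarrow> \<alpha> * fst q + \<beta> * snd q < \<alpha> * fst v + \<beta> * snd v"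
      using exposed_vertex[OF fT vex[OF v]] by blast
    obtain \<epsilon> s where es: "\<epsilon> = 1 \<or> \<epsilon> = -1" "\<forall>q\<in>T. q \<noteq> v \<longrightarrow> \<epsilon> * snd q + s * fst q < \<epsilon> * snd v + s * fst v"
      using slope_exists[OF fT ab] by blast
    have "\<forall>q\<in>S. q \<noteq> p \<longrightarrow> \<epsilon>*real(snd q) + s*real(fst q) < \<epsilon>*real(snd p) + s*real(fst p)"
    proof (intro ballI impI)
      fix q assume q: "q \<in> S" "q \<noteq> p"
      have "phi q \<in> T" "phi q \<noteq> v" using q p injphi unfolding T_def by (auto dest: injD)
      then show "\<epsilon>*real(snd q) + s*real(fst q) < \<epsilon>*real(snd p) + s*real(fst p)"
        using es(2) p(2) by (auto simp: phi)
    qed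
    then have "p \<in> Ue \<epsilon>" using p(1) unfolding Ue_def by blast
    then show "v \<in> phi ` (Ue 1 \<union> Ue (-1))" using es(1) p(2) by auto
  qed
  have fUe: "finite (Ue e)" for e using fin unfolding Ue_def S_def by auto
  have "k \<le> card (phi ` (Ue 1 \<union> Ue (-1)))"
    using card_mono[OF _ VU] fUe cV unfolding V_def by auto
  also have "\<dots> \<le> card (Ue 1 \<union> Ue (-1))" by (rule card_image_le) (simp add: fUe)
  also have "\<dots> \<le> card (Ue 1) + card (Ue (-1))" by (rule card_Un_le)
  finally have kk: "k \<le> card (Ue 1) + card (Ue (-1))" .
  obtain \<epsilon> :: real where ek: "real k \<le> 2 * real (card (Ue \<epsilon>))"
  proof (cases "card (Ue (-1)) \<le> card (Ue 1)")
    case True then show ?thesis using that[of 1] kk by linarith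
  next
    case False then show ?thesis using that[of "-1"] kk by linarith
  qed
  define sl where "sl p = (SOME s. \<forall>q\<in>S. q \<noteq> p \<longrightarrow> \<epsilon>*real(snd q) + s*real(fst q) < \<epsilon>*real(snd p) + s*real(fst p))" for p
  have "slopes (bsupp f) (Ue \<epsilon>) \<epsilon> sl"
  proof
    show "Ue \<epsilon> \<subseteq> bsupp f" unfolding Ue_def S_def by auto
    fix p q assume p: "p \<in> Ue \<epsilon>" and q: "q \<in> bsupp f" "q \<noteq> p"
    have "\<exists>s. \<forall>q\<in>S. q \<noteq> p \<longrightarrow> \<epsilon>*real(snd q) + s*real(fst q) < \<epsilon>*real(snd p) + s*real(fst p)"
      using p unfolding Ue_def by blast
    then have "\<forall>q\<in>S. q \<noteq> p \<longrightarrow> \<epsilon>*real(snd q) + sl p*real(fst q) < \<epsilon>*real(snd p) + sl p*real(fst p)"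
      unfolding sl_def by (rule someI_ex)
    then show "\<epsilon>*real(snd q) + sl p*real(fst q) < \<epsilon>*real(snd p) + sl p*real(fst p)"
      using q unfolding S_def by blast
  qed
  from main_eps[OF fin this] obtain a R where a: "a \<noteq> 0" "finite R"
    "real (card (Ue \<epsilon>)) - 6 \<le> 8 * real (card R)" "\<forall>x\<in>R. poly (re_poly (specialize_y f a)) x = 0"
    by blast
  have "1/32 * real k \<le> real (card R)" using a(3) ek k by linarith
  then show "\<exists>a. a \<noteq> 0 \<and> (\<exists>S. finite S \<and> 1/32 * real k \<le> real (card S) \<and>
                 (\<forall>x\<in>S. poly (re_poly (specialize_y f a)) x = 0))"
    using a by blast
  qed
qed


end
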